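(* For all loop-free hybrid programs $A,B,C,D$ and every set of variables $H$: if $FV(C)\cup FV(D)\subseteq H$, $A\equiv_H B$, and $C\equiv_H D$, then $(A;C)\equiv_H(B;D)$.
   Context: Hybrid programs and their transition semantics $[\![\cdot]\!]$ are as in differential dynamic logic ($x:=\theta$, $x:=*$, $?\phi$, $x'=\theta\,\&\,Q$, $;$, $\cup$, $^*$); a program is loop-free if it contains no $^*$. $FV(\alpha)$ is the standard $d\mathcal{L}$ set of free variables of $\alpha$: $FV(x:=\theta)=FV(\theta)$, $FV(x:=* )=\emptyset$, $FV(?\phi)=FV(\phi)$, $FV(x'=\theta\,\&\,Q)=\{x\}\cup FV(\theta)\cup FV(Q)$, $FV(\alpha\cup\beta)=FV(\alpha)\cup FV(\beta)$, $FV(\alpha;\beta)=FV(\alpha)\cup(FV(\beta)\setminus MBV(\alpha))$, $FV(\alpha^* )=FV(\alpha)$, where $MBV$ (must-bound variables) is: $\{x\}$ for $x:=\theta$ and $x:=*$, $\emptyset$ for tests and loops, $\{x,x'\}$ for ODEs, $MBV(\alpha\cup\beta)=MBV(\alpha)\cap MBV(\beta)$, $MBV(\alpha;\beta)=MBV(\alpha)\cup MBV(\beta)$. States $\sigma,\sigma'$ satisfy $\sigma\approx_H\sigma'$ iff they agree on every variable in $H$. For loop-free programs, $\alpha\equiv_H\beta$ iff for all states $\sigma_0,\sigma_1$ with $(\sigma_0,\sigma_1)\in[\![\alpha]\!]$ there exist $\sigma'_0,\sigma'_1$ with $(\sigma'_0,\sigma'_1)\in[\![\beta]\!]$, $\sigma_0\approx_H\sigma'_0$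 and $\sigma_1\approx_H\sigma'_1$, and symmetrically with $\alpha,\beta$ exchanged. *)

theory Defs
  imports Complex_Main
begin

type_synonym ident = string

text \<open>Variables: plain variables x and differential symbols x'.\<close>
datatype var = Var ident | DVar ident

type_synonym state = "var \<Rightarrow> real"

datatype trm =
    V var
  | Const real
  | Plus trm trm
  | Times trm trm

datatype hp =
    Assign var trm
  | AssignAny var
  | Test fml
  | ODE ident trm fml         (* x' = theta & Q *)
  | Choice hp hp
  | Seq hp hp
  | Loop hp
and fml =
    Geq trm trm
  | Not fml
  | And fml fml
  | Exists var fml
  | Box hp fml

primrec tsem :: "trm \<Rightarrow> state \<Rightarrow> real" where
  "tsem (V x) s = s x"
| "tsem (Const c) s = c"
| "tsem (Plus a b) s = tsem a s + tsem b s"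
| "tsem (Times a b) s = tsem a s * tsem b s"

definition agree :: "state \<Rightarrow> state \<Rightarrow> var set \<Rightarrow> bool" where
  "agree s t H \<longleftrightarrow> (\<forall>v\<in>H. s v = t v)"

primrec psem :: "hp \<Rightarrow> (state \<times> state) set"
and fsem :: "fml \<Rightarrow> state set" where
  "psem (Assign x e) = {(s, t). t = s(x := tsem e s)}"
| "psem (AssignAny x) = {(s, t). \<exists>r. t = s(x := r)}"
| "psem (Test p) = {(s, t). t = s \<and> s \<in> fsem p}"
| "psem (ODE x e Q) = {(s, t). \<exists>(r::real) (f::real \<Rightarrow> state).
      0 \<le> r \<and> agree (f 0) s (- {DVar x}) \<and> t = f r \<and>
      (\<forall>z\<in>{0..r}.
          agree (f z) s (- {Var x, DVar x}) \<and>
          f z (DVar x) = tsem e (f z) \<and>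
          f z \<in> fsem Q \<and>
          ((\<lambda>u. f u (Var x)) has_real_derivative f z (DVar x)) (at z within {0..r}))}"
| "psem (Choice a b) = psem a \<union> psem b"
| "psem (Seq a b) = psem a O psem b"
| "psem (Loop a) = (psem a)\<^sup>*"
| "fsem (Geq a b) = {s. tsem a s \<ge> tsem b s}"
| "fsem (Not p) = - fsem p"
| "fsem (And p q) = fsem p \<inter> fsem q"
| "fsem (Exists x p) = {s. \<exists>r. s(x := r) \<in> fsem p}"
| "fsem (Box a p) = {s. \<forall>t. (s, t) \<in> psem a \<longrightarrow> t \<in> fsem p}"

primrec FVt :: "trm \<Rightarrow> var set" where
  "FVt (V x) = {x}"
| "FVt (Const c) = {}"
| "FVt (Plus a b) = FVt a \<union> FVt b"
| "FVt (Times a b) = FVt a \<union> FVt b"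

primrec MBV :: "hp \<Rightarrow> var set" where
  "MBV (Assign x e) = {x}"
| "MBV (AssignAny x) = {x}"
| "MBV (Test p) = {}"
| "MBV (ODE x e Q) = {Var x, DVar x}"
| "MBV (Choice a b) = MBV a \<inter> MBV b"
| "MBV (Seq a b) = MBV a \<union> MBV b"
| "MBV (Loop a) = {}"

primrec FV :: "hp \<Rightarrow> var set"
and FVf :: "fml \<Rightarrow> var set" where
  "FV (Assign x e) = FVt e"
| "FV (AssignAny x) = {}"
| "FV (Test p) = FVf p"
| "FV (ODE x e Q) = {Var x} \<union> FVt e \<union> FVf Q"
| "FV (Choice a b) = FV a \<union> FV b"
| "FV (Seq a b) = FV a \<union> (FV b - MBV a)"
| "FV (Loop a) = FV a"
| "FVf (Geq a b) = FVt a \<union> FVt b"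
| "FVf (Not p) = FVf p"
| "FVf (And p q) = FVf p \<union> FVf q"
| "FVf (Exists x p) = FVf p - {x}"
| "FVf (Box a p) = FV a \<union> (FVf p - MBV a)"

primrec loop_free :: "hp \<Rightarrow> bool" where
  "loop_free (Assign x e) = True"
| "loop_free (AssignAny x) = True"
| "loop_free (Test p) = True"
| "loop_free (ODE x e Q) = True"
| "loop_free (Choice a b) = (loop_free a \<and> loop_free b)"
| "loop_free (Seq a b) = (loop_free a \<and> loop_free b)"
| "loop_free (Loop a) = False"

definition hequiv :: "hp \<Rightarrow> var set \<Rightarrow> hp \<Rightarrow> bool" where
  "hequiv a H b \<longleftrightarrow>
     (\<forall>s0 s1. (s0, s1) \<in> psem a \<longrightarrow>
        (\<exists>t0 t1. (t0, t1) \<in> psem b \<and> agree s0 t0 H \<and> agree s1 t1 H)) \<and>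
     (\<forall>s0 s1. (s0, s1) \<in> psem b \<longrightarrow>
        (\<exists>t0 t1. (t0, t1) \<in> psem a \<and> agree s0 t0 H \<and> agree s1 t1 H))"

end

theory Submission
  imports Defs
begin

lemma agree_sym: "agree s t X \<Longrightarrow> agree t s X"
  by (auto simp: agree_def)

lemma agree_mono: "agree s t X \<Longrightarrow> Y \<subseteq> X \<Longrightarrow> agree s t Y"
  by (auto simp: agree_def)

lemma agree_trans: "agree s t X \<Longrightarrow> agree t u X \<Longrightarrow> agree s u X"
  by (auto simp: agree_def)

lemma tsem_coinc: "agree s t (FVt e) \<Longrightarrow> tsem e s = tsem e t"
  by (induction e) (auto simp: agree_def)

lemma coinc:
  "\<forall>X s t \<nu>. FV a \<subseteq> X \<longrightarrow> agree s t X \<longrightarrow> (s,\<nu>) \<in> psem a \<longrightarrow>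
      (\<exists>\<nu>'. (t,\<nu>') \<in> psem a \<and> agree \<nu> \<nu>' (X \<union> MBV a))"
  "\<forall>s t. agree s t (FVf p) \<longrightarrow> s \<in> fsem p \<longrightarrow> t \<in> fsem p"
proof (induction a and p)
  case (Assign x e)
  show ?case
  proof (intro allI impI)
    fix X s t \<nu>
    assume "FV (Assign x e) \<subseteq> X" "agree s t X" "(s,\<nu>) \<in> psem (Assign x e)"
    then have "tsem e s = tsem e t" using tsem_coinc agree_mono by fastforce
    then show "\<exists>\<nu>'. (t,\<nu>') \<in> psem (Assign x e) \<and> agree \<nu> \<nu>' (X \<union> MBV (Assign x e))"
      using \<open>agree s t X\<close> \<open>(s,\<nu>) \<in> psem (Assign x e)\<close>
      by (auto simp: agree_def)
  qed
next
  case (AssignAny x)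
  then show ?case by (fastforce simp: agree_def)
next
  case (Test q)
  show ?case
  proof (intro allI impI)
    fix X s t \<nu>
    assume a: "FV (Test q) \<subseteq> X" "agree s t X" "(s,\<nu>) \<in> psem (Test q)"
    then have "agree s t (FVf q)" using agree_mono by auto
    with Test a show "\<exists>\<nu>'. (t,\<nu>') \<in> psem (Test q) \<and> agree \<nu> \<nu>' (X \<union> MBV (Test q))"
      by auto
  qed
next
  case (ODE x e Q)
  show ?case
  proof (intro allI impI)
    fix X s t \<nu>
    assume sub: "FV (ODE x e Q) \<subseteq> X" and ag: "agree s t X" and run: "(s,\<nu>) \<in> psem (ODE x e Q)"
    from run obtain r f where r0: "0 \<le> r" and f0: "agree (f 0) s (- {DVar x})" and nu: "\<nu> = f r"
      and fz: "\<And>z. z\<in>{0..r} \<Longrightarrow> agree (f z) s (- {Var x, DVar x}) \<and>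
          f z (DVar x) = tsem e (f z) \<and> f z \<in> fsem Q \<and>
          ((\<lambda>u. f u (Var x)) has_real_derivative f z (DVar x)) (at z within {0..r})"
      by (auto simp del: atLeastAtMost_iff)
    define g where "g = (\<lambda>z v. if v \<in> {Var x, DVar x} then f z v else t v)"
    have agfg: "agree (f z) (g z) X" if "z\<in>{0..r}" for z
      using fz[OF that] ag unfolding agree_def g_def by auto
    have "(t, g r) \<in> psem (ODE x e Q)"
    proof -
      have "agree (g 0) t (- {DVar x})"
      proof -
        have "f 0 (Var x) = s (Var x)" using f0 by (auto simp: agree_def)
        moreover have "s (Var x) = t (Var x)" using ag sub by (auto simp: agree_def)
        ultimately show ?thesis by (auto simp: agree_def g_def)
      qed
      moreover have "\<forall>z\<in>{0..r}.
          agree (g z) t (- {Var x, DVar x}) \<and>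
          g z (DVar x) = tsem e (g z) \<and>
          g z \<in> fsem Q \<and>
          ((\<lambda>u. g u (Var x)) has_real_derivative g z (DVar x)) (at z within {0..r})"
      proof
        fix z assume z: "z\<in>{0..r}"
        have a1: "agree (g z) t (- {Var x, DVar x})" by (auto simp: agree_def g_def)
        have "tsem e (f z) = tsem e (g z)"
          using tsem_coinc agree_mono[OF agfg[OF z]] sub by auto
        then have a2: "g z (DVar x) = tsem e (g z)" using fz[OF z] by (simp add: g_def)
        have "agree (f z) (g z) (FVf Q)" using agree_mono[OF agfg[OF z]] sub by auto
        then have a3: "g z \<in> fsem Q" using ODE fz[OF z] by blast
        have "(\<lambda>u. g u (Var x)) = (\<lambda>u. f u (Var x))" by (auto simp: g_def)
        then have a4: "((\<lambda>u. g u (Var x)) has_real_derivative g z (DVar x)) (at z within {0..r})"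
          using fz[OF z] \<open>g z (DVar x) = tsem e (g z)\<close> \<open>tsem e (f z) = tsem e (g z)\<close> by metis
        show "agree (g z) t (- {Var x, DVar x}) \<and>
          g z (DVar x) = tsem e (g z) \<and>
          g z \<in> fsem Q \<and>
          ((\<lambda>u. g u (Var x)) has_real_derivative g z (DVar x)) (at z within {0..r})"
          using a1 a2 a3 a4 by blast
      qed
      ultimately show ?thesis using r0 by auto
    qed
    moreover have "agree \<nu> (g r) (X \<union> MBV (ODE x e Q))"
      using agfg[of r] r0 nu by (auto simp: agree_def g_def)
    ultimately show "\<exists>\<nu>'. (t,\<nu>') \<in> psem (ODE x e Q) \<and> agree \<nu> \<nu>' (X \<union> MBV (ODE x e Q))"
      by blast
  qed
next
  case (Choice a b)
  show ?case
  proof (intro allI impI)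
    fix X s t \<nu>
    assume sub: "FV (Choice a b) \<subseteq> X" and ag: "agree s t X" and run: "(s,\<nu>) \<in> psem (Choice a b)"
    from run consider "(s,\<nu>) \<in> psem a" | "(s,\<nu>) \<in> psem b" by auto
    then show "\<exists>\<nu>'. (t,\<nu>') \<in> psem (Choice a b) \<and> agree \<nu> \<nu>' (X \<union> MBV (Choice a b))"
    proof cases
      case 1
      have "FV a \<subseteq> X" using sub by simp
      with Choice(1)[rule_format, OF _ ag 1] obtain \<nu>' where "(t,\<nu>') \<in> psem a" "agree \<nu> \<nu>' (X \<union> MBV a)" by blast
      moreover have "X \<union> MBV (Choice a b) \<subseteq> X \<union> MBV a" by auto
      ultimately show ?thesis using agree_mono[of \<nu> \<nu>' "X \<union> MBV a"] by (metis Un_iff psem.simps(5))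
    next
      case 2
      have "FV b \<subseteq> X" using sub by simp
      with Choice(2)[rule_format, OF _ ag 2] obtain \<nu>' where "(t,\<nu>') \<in> psem b" "agree \<nu> \<nu>' (X \<union> MBV b)" by blast
      moreover have "X \<union> MBV (Choice a b) \<subseteq> X \<union> MBV b" by auto
      ultimately show ?thesis using agree_mono[of \<nu> \<nu>' "X \<union> MBV b"] by (metis Un_iff psem.simps(5))
    qed
  qed
next
  case (Seq a b)
  show ?case
  proof (intro allI impI)
    fix X s t \<nu>
    assume sub: "FV (Seq a b) \<subseteq> X" and ag: "agree s t X" and run: "(s,\<nu>) \<in> psem (Seq a b)"
    then obtain \<mu> where m1: "(s,\<mu>) \<in> psem a" and m2: "(\<mu>,\<nu>) \<in> psem b" by auto
    have "FV a \<subseteq> X" using sub by simp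
    with Seq(1)[rule_format, OF _ ag m1] obtain \<mu>' where "(t,\<mu>') \<in> psem a" and am: "agree \<mu> \<mu>' (X \<union> MBV a)" by blast
    moreover have "FV b \<subseteq> X \<union> MBV a" using sub by auto
    ultimately obtain \<nu>' where "(\<mu>',\<nu>') \<in> psem b" "agree \<nu> \<nu>' (X \<union> MBV a \<union> MBV b)"
      using Seq(2)[rule_format, OF _ am m2] by blast
    with \<open>(t,\<mu>') \<in> psem a\<close> show "\<exists>\<nu>'. (t,\<nu>') \<in> psem (Seq a b) \<and> agree \<nu> \<nu>' (X \<union> MBV (Seq a b))"
      by (auto simp: Un_assoc)
  qed
next
  case (Loop a)
  show ?case
  proof (intro allI impI)
    fix X s t \<nu>
    assume sub: "FV (Loop a) \<subseteq> X" and ag: "agree s t X" and run: "(s,\<nu>) \<in> psem (Loop a)"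
    from run have "(s,\<nu>) \<in> (psem a)\<^sup>*" by simp
    then have "\<exists>\<nu>'. (t,\<nu>') \<in> (psem a)\<^sup>* \<and> agree \<nu> \<nu>' X"
    proof (induction rule: rtrancl_induct)
      case base then show ?case using ag by blast
    next
      case (step y z)
      then obtain y' where y': "(t,y') \<in> (psem a)\<^sup>*" "agree y y' X" by blast
      have "FV a \<subseteq> X" using sub by simp
      with Loop[rule_format, OF _ y'(2) step(2)] obtain z' where "(y',z') \<in> psem a" "agree z z' (X \<union> MBV a)" by blast
      then show ?case using y' agree_mono[of z z' "X \<union> MBV a" X]
        by (meson rtrancl_into_rtrancl sup_ge1)
    qed
    then show "\<exists>\<nu>'. (t,\<nu>') \<in> psem (Loop a) \<and> agree \<nu> \<nu>' (X \<union> MBV (Loop a))" by simp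
  qed
next
  case (Geq a b)
  then show ?case using tsem_coinc agree_mono
    by (metis (no_types, lifting) FVf.simps(1) fsem.simps(1) mem_Collect_eq sup_ge1 sup_ge2)
next
  case (Not p)
  then show ?case using agree_sym by (metis ComplD ComplI FVf.simps(2) fsem.simps(2))
next
  case (And p q)
  then show ?case using agree_mono by (metis FVf.simps(3) IntD1 IntD2 IntI fsem.simps(3) sup_ge1 sup_ge2)
next
  case (Exists x p)
  show ?case
  proof (intro allI impI)
    fix s t assume ag: "agree s t (FVf (Exists x p))" and m: "s \<in> fsem (Exists x p)"
    then obtain r where "s(x := r) \<in> fsem p" by auto
    moreover have "agree (s(x := r)) (t(x := r)) (FVf p)" using ag by (auto simp: agree_def)
    ultimately have "t(x := r) \<in> fsem p" using Exists by blast
    then show "t \<in> fsem (Exists x p)" by auto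
  qed
next
  case (Box a p)
  show ?case
  proof (intro allI impI)
    fix s t assume ag: "agree s t (FVf (Box a p))" and m: "s \<in> fsem (Box a p)"
    show "t \<in> fsem (Box a p)"
    proof (simp, intro allI impI)
      fix \<nu>' assume "(t,\<nu>') \<in> psem a"
      have "FV a \<subseteq> FVf (Box a p)" by simp
      with Box(1)[rule_format, OF _ agree_sym[OF ag]] \<open>(t,\<nu>') \<in> psem a\<close> obtain \<nu> where "(s,\<nu>) \<in> psem a"
        and an: "agree \<nu>' \<nu> (FVf (Box a p) \<union> MBV a)" by blast
      then have "\<nu> \<in> fsem p" using m by auto
      moreover have "agree \<nu> \<nu>' (FVf p)" using agree_sym[OF an] by (rule agree_mono) auto
      ultimately show "\<nu>' \<in> fsem p" using Box(2) by blast
    qed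
  qed
qed

theorem theorem2:
  assumes "loop_free A" and "loop_free B" and "loop_free C" and "loop_free D"
    and "FV C \<union> FV D \<subseteq> H"
    and "hequiv A H B" and "hequiv C H D"
  shows "hequiv (Seq A C) H (Seq B D)"
proof -
  have key: "\<exists>t0 t2. (t0,t2) \<in> psem (Seq Q S) \<and> agree s0 t0 H \<and> agree s2 t2 H"
    if h1: "hequiv P H Q" and h2: "hequiv R H S" and h3: "FV S \<subseteq> H" and h4: "(s0,s2) \<in> psem (Seq P R)" for P Q R S s0 s2
  proof -
    from h4 obtain s1 where "(s0,s1) \<in> psem P" "(s1,s2) \<in> psem R" by auto
    have "\<exists>t0 t1. (t0,t1) \<in> psem Q \<and> agree s0 t0 H \<and> agree s1 t1 H"
      using conjunct1[OF h1[unfolded hequiv_def], rule_format, OF \<open>(s0,s1) \<in> psem P\<close>] .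
    then obtain t0 t1 where b: "(t0,t1) \<in> psem Q" "agree s0 t0 H" "agree s1 t1 H" by blast
    have "\<exists>u1 u2. (u1,u2) \<in> psem S \<and> agree s1 u1 H \<and> agree s2 u2 H"
      using conjunct1[OF h2[unfolded hequiv_def], rule_format, OF \<open>(s1,s2) \<in> psem R\<close>] .
    then obtain u1 u2 where d: "(u1,u2) \<in> psem S" "agree s1 u1 H" "agree s2 u2 H" by blast
    have "agree u1 t1 H" using d(2) b(3) agree_sym agree_trans by blast
    then obtain w where "(t1,w) \<in> psem S" "agree u2 w (H \<union> MBV S)"
      using coinc(1) d(1) h3 by blast
    then have "agree s2 w H" using d(3) agree_trans agree_mono by blast
    then show ?thesis using b \<open>(t1,w) \<in> psem S\<close> by auto
  qed
  have s1: "hequiv B H A" "hequiv D H C" using assms(6,7) unfolding hequiv_def by (simp_all add: conj_commute)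
  show ?thesis unfolding hequiv_def
  proof (intro conjI allI impI)
    fix s0 s2 assume "(s0, s2) \<in> psem (Seq A C)"
    then show "\<exists>t0 t1. (t0, t1) \<in> psem (Seq B D) \<and> agree s0 t0 H \<and> agree s2 t1 H"
      using key[OF assms(6,7)] assms(5) by simp
  next
    fix s0 s2 assume "(s0, s2) \<in> psem (Seq B D)"
    then show "\<exists>t0 t1. (t0, t1) \<in> psem (Seq A C) \<and> agree s0 t0 H \<and> agree s2 t1 H"
      using key[OF s1] assms(5) by simp
  qed
qed

end
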